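(* Let $\mathbf{x}_1,\ldots,\mathbf{x}_n\in\mathbb{S}^{d-1}$ be distinct. Then the matrix $\mathbf{H}^\infty\in\mathbb{R}^{n\times n}$ with entries $$H^\infty_{ij}=\frac{(\mathbf{x}_i^\top\mathbf{x}_j+1)\,(\pi-\arccos(\mathbf{x}_i^\top\mathbf{x}_j))}{4\pi}$$ is symmetric and positive definite.
   Context: $d\ge 2$ and $\mathbb{S}^{d-1}\subset\mathbb{R}^d$ is the unit sphere. Equivalently, $H^\infty_{ij}=\mathbb{E}_{\mathbf{w}\sim\mathcal{N}(\mathbf{0},\kappa^2\mathbf{I})}\big[\tfrac{\mathbf{x}_i^\top\mathbf{x}_j+1}{2}\,\mathbb{I}_{\{\mathbf{w}^\top\mathbf{x}_i\ge 0,\ \mathbf{w}^\top\mathbf{x}_j\ge 0\}}\big]$ for any $\kappa>0$. No assumption is made excluding antipodal pairs $\mathbf{x}_i=-\mathbf{x}_j$. *)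

theory Defs
  imports "HOL-Analysis.Analysis"
begin

definition symmetric_matrix :: "real^'n^'n \<Rightarrow> bool" where
  "symmetric_matrix A \<longleftrightarrow> transpose A = A"

definition pos_def_matrix :: "real^'n^'n \<Rightarrow> bool" where
  "pos_def_matrix A \<longleftrightarrow> (\<forall>v. v \<noteq> 0 \<longrightarrow> v \<bullet> (A *v v) > 0)"

definition H_inf :: "('n::finite \<Rightarrow> real^'d) \<Rightarrow> real^'n^'n" where
  "H_inf x = (\<chi> i j. ((x i \<bullet> x j + 1) * (pi - arccos (x i \<bullet> x j))) / (4 * pi))"

end

theory Submission
  imports Defs "HOL-Analysis.Analysis"
begin


definition ca :: "nat \<Rightarrow> real" where "ca n = (-1)^n * ((-1/2) gchoose n)"
definition cb :: "nat \<Rightarrow> real" where "cb n = ca n / (2 * real n + 1)"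

lemma ca_pos: "ca n > 0"
proof -
  have "ca n = ((1/2 + real n - 1) gchoose n)"
    unfolding ca_def using gbinomial_minus[of "1/2::real" n] by simp
  also have "\<dots> = (\<Prod>i=0..<n. (real n - 1/2) - of_nat i) / fact n"
    by (simp add: gbinomial_prod_rev)
  also have "\<dots> > 0"
    by (intro divide_pos_pos prod_pos) auto
  finally show ?thesis .
qed

lemma cb_pos: "cb n > 0"
  unfolding cb_def using ca_pos[of n] by simp

lemma ca_sums: "\<bar>t\<bar> < 1 \<Longrightarrow> (\<lambda>n. ca n * t^(2*n)) sums inverse (sqrt (1 -(t^2)))"
proof -
  assume t: "\<bar>t\<bar> < 1"
  have t2: "t^2 < 1" using t by (simp add: abs_square_less_1)
  hence "abs (- (t^2)) < 1" by simp
  from gen_binomial_real[OF this, of "-1/2"]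
  have "(\<lambda>n. ((-1/2) gchoose n) * (-(t^2))^n) sums (1 + -(t^2)) powr (-1/2)" .
  moreover have "((-1/2) gchoose n) * (-(t^2))^n = ca n * t^(2*n)" for n
    unfolding ca_def by (subst power_minus) (simp add: power_mult)
  moreover have "(1 + -(t^2)) powr (-1/2) = inverse (sqrt (1 -(t^2)))"
  proof -
    have "0 \<le> 1 - t^2" using t2 by simp
    hence "(1 - t^2) powr (-1/2) = inverse ((1 - t^2) powr (1/2))"
      using powr_minus[of "1 - t^2" "1/2"] by simp
    thus ?thesis using \<open>0 \<le> 1 - t^2\<close> by (simp add: powr_half_sqrt)
  qed
  ultimately show ?thesis by simp
qed

lemma S_deriv:
  fixes t :: real assumes t: "\<bar>t\<bar> < 1"
  shows "summable (\<lambda>n. cb n * t^(2*n+1))"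
    and "((\<lambda>x. \<Sum>n. cb n * x^(2*n+1)) has_field_derivative inverse (sqrt (1 - t^2))) (at t)"
proof -
  obtain r where r: "\<bar>t\<bar> < r" "r < 1" using dense[OF t] by blast
  hence r0: "0 < r" by simp
  define S where "S = {-r..r}"
  have cv: "convex S" unfolding S_def by simp
  have der: "((\<lambda>x. cb n * x^(2*n+1)) has_field_derivative ca n * x^(2*n)) (at x within S)" for n x
  proof -
    have "((\<lambda>x. cb n * x^(2*n+1)) has_field_derivative cb n * (real (2*n+1) * x^(2*n))) (at x within S)"
      using DERIV_pow[of "2*n+1" x S] by (intro DERIV_cmult) simp
    moreover have "cb n * (real (2*n+1) * x^(2*n)) = ca n * x^(2*n)"
      unfolding cb_def by (simp add: field_simps)
    ultimately show ?thesis by (simp only:)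
  qed
  have "\<bar>r\<bar> < 1" using r r0 by simp
  from ca_sums[OF this] have sM: "summable (\<lambda>n. ca n * r^(2*n))" by (rule sums_summable)
  have uc: "uniformly_convergent_on S (\<lambda>n x. \<Sum>i<n. ca i * x^(2*i))"
  proof (rule Weierstrass_m_test'[OF _ sM])
    fix n x assume "x \<in> S"
    hence "\<bar>x\<bar> \<le> r" unfolding S_def by auto
    hence "\<bar>x\<bar>^(2*n) \<le> r^(2*n)" by (intro power_mono) auto
    thus "norm (ca n * x^(2*n)) \<le> ca n * r^(2*n)"
      using ca_pos[of n] by (simp add: abs_mult power_abs mult_left_mono)
  qed
  have x0: "(0::real) \<in> S" unfolding S_def using r0 by simp
  have sm0: "summable (\<lambda>n. cb n * (0::real)^(2*n+1))" by simp
  have ti: "t \<in> interior S" unfolding S_def using r by auto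
  note H = has_field_derivative_series'[OF cv der uc x0 sm0 ti]
  show "summable (\<lambda>n. cb n * t^(2*n+1))" by (rule H(1))
  have "(\<Sum>n. ca n * t^(2*n)) = inverse (sqrt (1 - t^2))"
    using ca_sums[OF t] by (simp add: sums_iff)
  with H(2) show "((\<lambda>x. \<Sum>n. cb n * x^(2*n+1)) has_field_derivative inverse (sqrt (1 - t^2))) (at t)"
    by simp
qed

lemma arcsin_sums_open:
  fixes t :: real assumes t: "\<bar>t\<bar> < 1"
  shows "(\<lambda>n. cb n * t^(2*n+1)) sums arcsin t"
proof -
  define D where "D x = (\<Sum>n. cb n * x^(2*n+1)) - arcsin x" for x :: real
  have "D t = D 0"
  proof (rule DERIV_isconst3[of "-1" 1 t 0 D])
    fix x :: real assume "x \<in> {-1<..<1}"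
    hence x: "\<bar>x\<bar> < 1" "-1 < x" "x < 1" by auto
    have "((\<lambda>x. (\<Sum>n. cb n * x^(2*n+1)) - arcsin x) has_field_derivative
            inverse (sqrt (1 - x^2)) - inverse (sqrt (1 - x^2))) (at x)"
      using S_deriv(2)[OF x(1)] DERIV_arcsin[OF x(2,3)] by (rule DERIV_diff)
    thus "DERIV D x :> 0" unfolding D_def[abs_def] by simp
  qed (use t in auto)
  hence "(\<Sum>n. cb n * t^(2*n+1)) = arcsin t" unfolding D_def by simp
  with S_deriv(1)[OF t] show ?thesis by (simp add: sums_iff)
qed

lemma cb_sums_1: "cb sums (pi/2)"
proof -
  have ev: "eventually (\<lambda>t. t \<in> {0<..<(1::real)}) (at_left 1)"
    by (rule eventually_at_left_real) simp
  have nb: "at_left (1::real) \<noteq> bot" by simp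
  have arc_lim: "(arcsin \<longlongrightarrow> pi/2) (at_left (1::real))"
    using continuous_on_Icc_at_leftD[OF continuous_on_arcsin', of ] by simp
  have bnd: "sum cb {..<N} \<le> pi/2" for N
  proof -
    have lim: "((\<lambda>t. \<Sum>n<N. cb n * t^(2*n+1)) \<longlongrightarrow> (\<Sum>n<N. cb n * 1^(2*n+1))) (at_left (1::real))"
      by (intro tendsto_intros)
    have "eventually (\<lambda>t. (\<Sum>n<N. cb n * t^(2*n+1)) \<le> pi/2) (at_left (1::real))"
      using ev
    proof eventually_elim
      case (elim t)
      hence t: "\<bar>t\<bar> < 1" "0 < t" "t < 1" by auto
      have "(\<Sum>n<N. cb n * t^(2*n+1)) \<le> (\<Sum>n. cb n * t^(2*n+1))"
        using sums_summable[OF arcsin_sums_open[OF t(1)]] cb_pos t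
        by (intro sum_le_suminf) (auto intro!: mult_nonneg_nonneg less_imp_le)
      also have "\<dots> = arcsin t" using arcsin_sums_open[OF t(1)] by (simp add: sums_iff)
      also have "\<dots> \<le> pi/2" using t by (intro arcsin_ubound) auto
      finally show ?case .
    qed
    from tendsto_le[OF trivial_limit_at_left_real tendsto_const lim this]
    show ?thesis by simp
  qed
  have sm: "summable cb"
  proof (rule bounded_imp_summable)
    show "0 \<le> cb n" for n using cb_pos[of n] by simp
    show "sum cb {..n} \<le> pi/2" for n using bnd[of "Suc n"] by (simp add: lessThan_Suc_atMost)
  qed
  have le: "suminf cb \<le> pi/2" by (rule suminf_le_const[OF sm bnd])
  have "eventually (\<lambda>t. arcsin t \<le> suminf cb) (at_left (1::real))"
    using ev
  proof eventually_elim
    case (elim t)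
    hence t: "\<bar>t\<bar> < 1" "0 < t" "t < 1" by auto
    have "arcsin t = (\<Sum>n. cb n * t^(2*n+1))" using arcsin_sums_open[OF t(1)] by (simp add: sums_iff)
    also have "\<dots> \<le> suminf cb"
    proof (rule suminf_le[OF _ sums_summable[OF arcsin_sums_open[OF t(1)]] sm])
      fix n
      have "t^(2*n+1) \<le> 1" using t by (intro power_le_one) auto
      thus "cb n * t^(2*n+1) \<le> cb n" using cb_pos[of n] by (simp add: mult_left_le)
    qed
    finally show ?case .
  qed
  from tendsto_le[OF trivial_limit_at_left_real tendsto_const arc_lim this]
  have "pi/2 \<le> suminf cb" .
  with le sm show ?thesis by (simp add: sums_iff)
qed

lemma arcsin_sums:
  fixes t :: real assumes t: "\<bar>t\<bar> \<le> 1"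
  shows "(\<lambda>n. cb n * t^(2*n+1)) sums arcsin t"
proof (cases "\<bar>t\<bar> < 1")
  case True thus ?thesis by (rule arcsin_sums_open)
next
  case False
  hence "t = 1 \<or> t = -1" using t by auto
  thus ?thesis
  proof
    assume "t = 1" thus ?thesis using cb_sums_1 by simp
  next
    assume t1: "t = -1"
    have "(\<lambda>n. - cb n) sums (- (pi/2))" by (rule sums_minus[OF cb_sums_1])
    moreover have "arcsin (-1) = - (pi/2)" using arcsin_minus[of 1] by simp
    ultimately show ?thesis using t1 by (simp add: power_add power_mult)
  qed
qed



definition Qf :: "('n::finite \<Rightarrow> real^'d) \<Rightarrow> nat \<Rightarrow> ('n \<Rightarrow> real) \<Rightarrow> real" where
  "Qf x k v = (\<Sum>i\<in>UNIV. \<Sum>j\<in>UNIV. v i * v j * (x i \<bullet> x j)^k)"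

lemma Qf_Suc: "Qf x (Suc k) v = (\<Sum>l\<in>UNIV. Qf x k (\<lambda>i. v i * x i $ l))"
proof -
  have "Qf x (Suc k) v = (\<Sum>i\<in>UNIV. \<Sum>j\<in>UNIV. \<Sum>l\<in>UNIV. (v i * x i $ l) * (v j * x j $ l) * (x i \<bullet> x j)^k)"
    unfolding Qf_def
    by (intro sum.cong refl) (simp add: inner_vec_def sum_distrib_left sum_distrib_right mult_ac)
  also have "\<dots> = (\<Sum>i\<in>UNIV. \<Sum>l\<in>UNIV. \<Sum>j\<in>UNIV. (v i * x i $ l) * (v j * x j $ l) * (x i \<bullet> x j)^k)"
    by (intro sum.cong refl sum.swap)
  also have "\<dots> = (\<Sum>l\<in>UNIV. \<Sum>i\<in>UNIV. \<Sum>j\<in>UNIV. (v i * x i $ l) * (v j * x j $ l) * (x i \<bullet> x j)^k)"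
    by (rule sum.swap)
  finally show ?thesis unfolding Qf_def .
qed

lemma Qf_nonneg: "Qf x k v \<ge> 0"
proof (induction k arbitrary: v)
  case 0
  have "Qf x 0 v = (\<Sum>i\<in>UNIV. v i)^2"
    unfolding Qf_def power2_eq_square by (simp add: sum_product)
  thus ?case by simp
next
  case (Suc k)
  show ?case unfolding Qf_Suc by (intro sum_nonneg Suc.IH)
qed

lemma delta_l: fixes f :: "'n::finite \<Rightarrow> real" shows "(\<Sum>j\<in>(UNIV::'n set). (if j = m then s else 0) * f j) = s * f m"
proof -
  have "(\<Sum>j\<in>(UNIV::'n set). (if j = m then s else 0) * f j) = (\<Sum>j\<in>UNIV. if j = m then s * f j else 0)"
    by (intro sum.cong) auto
  also have "\<dots> = s * f m" by (subst sum.delta) auto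
  finally show ?thesis .
qed

lemma Qf_pert:
  "Qf x k (\<lambda>i. v i + (if i = m then s else 0)) =
     Qf x k v + 2 * s * (\<Sum>i\<in>UNIV. v i * (x i \<bullet> x m)^k) + s^2 * (x m \<bullet> x m)^k"
proof -
  define e where "e i = (if i = m then s else 0)" for i
  define T where "T i j = (x i \<bullet> x j)^k" for i j
  have Tsym: "T i j = T j i" for i j unfolding T_def by (simp add: inner_commute)
  have "Qf x k (\<lambda>i. v i + e i) = (\<Sum>i\<in>UNIV. \<Sum>j\<in>UNIV. v i * v j * T i j + v i * (e j * T i j) + e i * (v j * T i j) + e i * (e j * T i j))"
    unfolding Qf_def T_def by (intro sum.cong refl) (simp add: algebra_simps)
  also have "\<dots> = Qf x k v + (\<Sum>i\<in>UNIV. v i * (s * T i m)) + (\<Sum>i\<in>UNIV. e i * (\<Sum>j\<in>UNIV. v j * T i j))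
      + (\<Sum>i\<in>UNIV. e i * (s * T i m))"
    unfolding sum.distrib Qf_def T_def[symmetric] sum_distrib_left[symmetric] e_def delta_l by simp
  also have "(\<Sum>i\<in>UNIV. e i * (\<Sum>j\<in>UNIV. v j * T i j)) = s * (\<Sum>j\<in>UNIV. v j * T m j)"
    unfolding e_def delta_l ..
  also have "(\<Sum>i\<in>UNIV. e i * (s * T i m)) = s * (s * T m m)"
    unfolding e_def delta_l ..
  also have "(\<Sum>j\<in>UNIV. v j * T m j) = (\<Sum>j\<in>UNIV. v j * T j m)"
    using Tsym by simp
  finally show ?thesis unfolding e_def T_def
    by (simp add: sum_distrib_left power2_eq_square algebra_simps)
qed



lemma Qf_zero_lin:
  assumes "Qf x k v = 0" "norm (x m) = 1"
  shows "(\<Sum>i\<in>UNIV. v i * (x i \<bullet> x m)^k) = 0"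
proof -
  define g where "g = (\<Sum>i\<in>UNIV. v i * (x i \<bullet> x m)^k)"
  have mm: "x m \<bullet> x m = 1" using assms(2) by (simp add: dot_square_norm)
  have "0 \<le> Qf x k (\<lambda>i. v i + (if i = m then - g else 0))" by (rule Qf_nonneg)
  also have "\<dots> = -(g^2)"
    unfolding Qf_pert assms(1) mm g_def[symmetric] by (simp add: power2_eq_square)
  finally have "g^2 \<le> 0" by simp
  hence "g = 0" by (simp add: power2_eq_square) (smt (verit) zero_le_square mult_eq_0_iff)
  thus ?thesis unfolding g_def .
qed

lemma limit_part:
  fixes x :: "'n::finite \<Rightarrow> real^'d"
  assumes nx: "\<And>i. norm (x i) = 1" and inj: "inj x"
    and z: "\<And>k. (\<Sum>i\<in>UNIV. v i * (x i \<bullet> x m)^k) = 0"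
  shows "v m = 0"
proof -
  define a where "a i = x i \<bullet> x m" for i
  have ab: "\<bar>a i\<bar> \<le> 1" for i
    unfolding a_def using Cauchy_Schwarz_ineq2[of "x i" "x m"] nx by simp
  have a1: "a i = 1 \<Longrightarrow> i = m" for i
  proof -
    assume "a i = 1"
    have "norm (x i - x m)^2 = x i \<bullet> x i - 2 * (x i \<bullet> x m) + x m \<bullet> x m"
      by (simp add: power2_norm_eq_inner algebra_simps inner_commute)
    also have "\<dots> = 0" using \<open>a i = 1\<close> nx by (simp add: a_def dot_square_norm)
    finally have "x i = x m" by simp
    thus "i = m" using inj by (simp add: inj_eq)
  qed
  have am: "a m = 1" unfolding a_def using nx[of m] by (simp add: dot_square_norm)
  have lim: "(\<lambda>n. v i * (a i ^ 2)^n * (1 + a i)) \<longlonglongrightarrow> (if i = m then 2 * v m else 0)" for i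
  proof (cases "i = m")
    case True thus ?thesis using am by (simp add: mult.commute)
  next
    case False
    hence an1: "a i \<noteq> 1" using a1 by blast
    show ?thesis
    proof (cases "a i = -1")
      case True thus ?thesis using False by simp
    next
      case F2: False
      with an1 ab[of i] have "\<bar>a i\<bar> < 1" by auto
      hence "a i ^ 2 < 1" by (simp add: abs_square_less_1)
      hence "(\<lambda>n. (a i ^ 2)^n) \<longlonglongrightarrow> 0" by (intro LIMSEQ_realpow_zero) auto
      hence "(\<lambda>n. v i * (a i ^ 2)^n * (1 + a i)) \<longlonglongrightarrow> v i * 0 * (1 + a i)"
        by (intro tendsto_mult tendsto_const)
      thus ?thesis using False by simp
    qed
  qed
  have "(\<lambda>n. \<Sum>i\<in>UNIV. v i * (a i ^ 2)^n * (1 + a i)) \<longlonglongrightarrow> (\<Sum>i\<in>UNIV. if i = m then 2 * v m else 0)"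
    by (intro tendsto_sum lim)
  moreover have "(\<lambda>n. \<Sum>i\<in>UNIV. v i * (a i ^ 2)^n * (1 + a i)) = (\<lambda>n. 0)"
  proof
    fix n
    have "(\<Sum>i\<in>UNIV. v i * (a i ^ 2)^n * (1 + a i)) =
          (\<Sum>i\<in>UNIV. v i * a i ^ (2*n)) + (\<Sum>i\<in>UNIV. v i * a i ^ (2*n+1))"
    proof -
      have "v i * (a i ^ 2)^n * (1 + a i) = v i * a i ^ (2*n) + v i * a i ^ (2*n+1)" for i
      proof -
        have "(a i ^ 2)^n = a i ^ (2*n)" by (simp add: power_mult)
        moreover have "a i ^ (2*n+1) = a i ^ (2*n) * a i" by simp
        ultimately show ?thesis by (simp add: algebra_simps)
      qed
      thus ?thesis by (simp add: sum.distrib)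
    qed
    also have "\<dots> = 0" using z[of "2*n"] z[of "2*n+1"] unfolding a_def by simp
    finally show "(\<Sum>i\<in>UNIV. v i * (a i ^ 2)^n * (1 + a i)) = 0" .
  qed
  ultimately have "(\<lambda>n. 0::real) \<longlonglongrightarrow> 2 * v m" by simp
  hence "2 * v m = 0" using LIMSEQ_unique tendsto_const by blast
  thus ?thesis by simp
qed

lemma kernel_sums:
  fixes t :: real assumes t: "\<bar>t\<bar> \<le> 1"
  shows "(\<lambda>n. cb n / (4*pi) * (t^(2*n+1) + t^(2*n+2))) sums
           ((t+1) * (pi - arccos t) / (4*pi) - (1+t)/8)"
proof -
  have S: "(\<lambda>n. cb n * t^(2*n+1) * ((1+t)/(4*pi))) sums (arcsin t * ((1+t)/(4*pi)))"
    by (rule sums_mult2[OF arcsin_sums[OF t]])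
  have E1: "(\<lambda>n. cb n * t^(2*n+1) * ((1+t)/(4*pi))) = (\<lambda>n. cb n / (4*pi) * (t^(2*n+1) + t^(2*n+2)))"
  proof
    fix n
    have "t^(2*n+2) = t^(2*n+1) * t" by simp
    thus "cb n * t^(2*n+1) * ((1+t)/(4*pi)) = cb n / (4*pi) * (t^(2*n+1) + t^(2*n+2))"
      by (simp add: field_simps)
  qed
  have E2: "arcsin t * ((1+t)/(4*pi)) = (t+1) * (pi - arccos t) / (4*pi) - (1+t)/8"
    using t by (simp add: arccos_arcsin_eq field_simps)
  show ?thesis using S unfolding E1 E2 .
qed



theorem proposition1:
  fixes x :: "'n::finite \<Rightarrow> real^'d"
  assumes "CARD('d) \<ge> 2"
    and "\<And>i. norm (x i) = 1"
    and "inj x"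
  shows "symmetric_matrix (H_inf x) \<and> pos_def_matrix (H_inf x)"
proof
  show "symmetric_matrix (H_inf x)"
    unfolding symmetric_matrix_def H_inf_def transpose_def by (simp add: vec_eq_iff inner_commute)
next
  note nx = assms(2)
  show "pos_def_matrix (H_inf x)"
    unfolding pos_def_matrix_def
  proof (intro allI impI)
    fix v :: "real^'n" assume v0: "v \<noteq> 0"
    define w where "w i = v $ i" for i
    define T where "T i j = x i \<bullet> x j" for i j
    have Tb: "\<bar>T i j\<bar> \<le> 1" for i j
      unfolding T_def using Cauchy_Schwarz_ineq2[of "x i" "x j"] nx by simp
    define K where "K i j = (T i j + 1) * (pi - arccos (T i j)) / (4*pi)" for i j
    have qf: "v \<bullet> (H_inf x *v v) = (\<Sum>i\<in>UNIV. \<Sum>j\<in>UNIV. w i * w j * K i j)"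
      unfolding H_inf_def matrix_vector_mult_def inner_vec_def[of v]
      by (simp add: sum_distrib_left mult_ac K_def T_def w_def)
    define F where "F n = cb n / (4*pi) * (Qf x (2*n+1) w + Qf x (2*n+2) w)" for n
    have Fs: "F sums ((\<Sum>i\<in>UNIV. \<Sum>j\<in>UNIV. w i * w j * K i j) - (Qf x 0 w + Qf x 1 w)/8)"
    proof -
      have S: "(\<lambda>n. \<Sum>i\<in>UNIV. \<Sum>j\<in>UNIV. w i * w j * (cb n / (4*pi) * (T i j^(2*n+1) + T i j^(2*n+2))))
               sums (\<Sum>i\<in>UNIV. \<Sum>j\<in>UNIV. w i * w j * (K i j - (1 + T i j)/8))"
        unfolding K_def by (intro sums_sum sums_mult kernel_sums Tb)
      have E1: "(\<lambda>n. \<Sum>i\<in>UNIV. \<Sum>j\<in>UNIV. w i * w j * (cb n / (4*pi) * (T i j^(2*n+1) + T i j^(2*n+2)))) = F"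
        unfolding F_def Qf_def T_def
        by (simp add: sum_distrib_left sum.distrib algebra_simps)
      have E2: "(\<Sum>i\<in>UNIV. \<Sum>j\<in>UNIV. w i * w j * (K i j - (1 + T i j)/8)) =
          (\<Sum>i\<in>UNIV. \<Sum>j\<in>UNIV. w i * w j * K i j) - (Qf x 0 w + Qf x 1 w)/8"
      proof -
        have QQ: "Qf x 0 w + Qf x 1 w = (\<Sum>i\<in>UNIV. \<Sum>j\<in>UNIV. w i * w j + w i * w j * T i j)"
          unfolding Qf_def T_def by (simp add: sum.distrib)
        have "(\<Sum>i\<in>UNIV. \<Sum>j\<in>UNIV. w i * w j * (K i j - (1 + T i j)/8)) =
           (\<Sum>i\<in>UNIV. \<Sum>j\<in>UNIV. w i * w j * K i j - (w i * w j + w i * w j * T i j)/8)"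
          by (intro sum.cong refl) (simp add: algebra_simps)
        also have "\<dots> = (\<Sum>i\<in>UNIV. \<Sum>j\<in>UNIV. w i * w j * K i j) -
             (\<Sum>i\<in>UNIV. \<Sum>j\<in>UNIV. w i * w j + w i * w j * T i j)/8"
          by (simp add: sum_subtractf sum_divide_distrib)
        finally show ?thesis unfolding QQ .
      qed
      show ?thesis using S unfolding E1 E2 .
    qed
    have Fnn: "F n \<ge> 0" for n
      unfolding F_def using cb_pos[of n] Qf_nonneg[of x "2*n+1" w] Qf_nonneg[of x "2*n+2" w]
      by simp
    show "v \<bullet> (H_inf x *v v) > 0"
    proof (rule ccontr)
      assume "\<not> v \<bullet> (H_inf x *v v) > 0"
      hence le: "(\<Sum>i\<in>UNIV. \<Sum>j\<in>UNIV. w i * w j * K i j) \<le> 0" using qf by simp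
      have eq: "(\<Sum>i\<in>UNIV. \<Sum>j\<in>UNIV. w i * w j * K i j) = (Qf x 0 w + Qf x 1 w)/8 + suminf F"
        using Fs by (simp add: sums_iff)
      have sF: "suminf F \<ge> 0" using Fs Fnn by (intro suminf_nonneg) (auto simp: sums_iff)
      have Q0: "Qf x 0 w \<ge> 0" and Q1: "Qf x 1 w \<ge> 0" by (rule Qf_nonneg)+
      from le have le2: "(Qf x 0 w + Qf x 1 w)/8 + suminf F \<le> 0" unfolding eq .
      have sF0: "suminf F = 0" using le2 sF Q0 Q1 by argo
      have Q01a: "Qf x 0 w = 0" using le2 sF Q0 Q1 by argo
      have Q01b: "Qf x 1 w = 0" using le2 sF Q0 Q1 by argo
      note Q01 = Q01a Q01b
      have "\<forall>n. F n = 0" using suminf_eq_zero_iff[of F] sF0 Fs Fnn by (simp add: sums_iff)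
      have Qodd: "Qf x (2*n+1) w = 0 \<and> Qf x (2*n+2) w = 0" for n
      proof -
        have "F n = 0" using \<open>\<forall>n. F n = 0\<close> by simp
        hence "Qf x (2*n+1) w + Qf x (2*n+2) w = 0"
          unfolding F_def using cb_pos[of n] pi_gt_zero by simp
        thus ?thesis using Qf_nonneg[of x "2*n+1" w] Qf_nonneg[of x "2*n+2" w] by linarith
      qed
      have Qz: "Qf x k w = 0" for k
      proof (cases k)
        case 0 thus ?thesis using Q01 by simp
      next
        case (Suc k')
        show ?thesis
        proof (cases "even k'")
          case True
          then obtain n where "k' = 2*n" by blast
          thus ?thesis using Qodd[of n] Suc by simp
        next
          case False
          then obtain n where "k' = 2*n+1" using oddE by blast
          thus ?thesis using Qodd[of n] Suc by simp
        qed
      qed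
      have "w m = 0" for m
      proof (rule limit_part[OF nx assms(3)])
        show "(\<Sum>i\<in>UNIV. w i * (x i \<bullet> x m)^k) = 0" for k
          by (rule Qf_zero_lin[OF Qz nx])
      qed
      hence "v = 0" unfolding w_def by (simp add: vec_eq_iff)
      with v0 show False by simp
    qed
  qed
qed

end
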